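(* In the setting of the context, suppose that $\mathcal{Q}$ satisfies Condition I (for all $i\in\{1,\dots,d\}$ and all $Z\in\mathcal{Q}$, $ZR^i\in L^1$), that $\Pi^\rho_0=\{\mathbf{0}\}$, and that $\tilde{\mathcal{Q}}_{\max}\ne\emptyset$. Then the following are equivalent: (a) the market does not admit $\rho$-arbitrage; (b) $\tilde{\mathcal{Q}}\cap\mathcal{P}\ne\emptyset$ for some nonempty $\tilde{\mathcal{Q}}\subset\mathcal{Q}$ satisfying Conditions POS, MIX and INT; (c) $\tilde{\mathcal{Q}}\cap\mathcal{P}\ne\emptyset$ for all nonempty $\tilde{\mathcal{Q}}\subset\mathcal{Q}$ satisfying Conditions POS, MIX and INT.
   Context: Let $(\Omega,\mathcal{F},\mathbb{P})$ be a probability space and a market: riskless asset $S^0_0=1$, $S^0_1=1+r$, $r>-1$; risky assets $S^1,\dots,S^d$ with constants $S^i_0>0$ and real-valued $\mathcal{F}$-measurable $S^i_1$; returns $R^i:=(S^i_1-S^i_0)/S^i_0$. Standing assumptions: nonredundancy (if $\theta\in\mathbb{R}^{1+d}$ with $\sum_{i=0}^d\theta^iS^i_t=0$ a.s. for $t\in\{0,1\}$ then $\theta=0$), $R^i\in L^1$, $\mathbb{E}[R^i]\ne r$ for some $i$. Excess return of $\pi\in\mathbb{R}^d$: $X_\pi:=\pi\cdot(R-r\mathbf{1})$; $\Pi_0:=\{\pi:\mathbb{E}[X_\pi]=0\}$; $\Pi^\rho_0$ is the set of $\pi\in\Pi_0$ with $\rho(X_\pi)<\infty$ and $\rho(X_\pi)\le\rho(X_{\pi'})$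 for all $\pi'\in\Pi_0$. $L$ is a Riesz space with $L^\infty\subset L\subset L^1$ containing all $X_\pi$. $\mathcal{D}:=\{Z\in L^1:Z\ge0 \text{ a.s.},\mathbb{E}[Z]=1\}$; $\mathcal{Q}\subset\mathcal{D}$ is convex with $1\in\mathcal{Q}$ and $\rho(X)=\sup_{Z\in\mathcal{Q}}\mathbb{E}[-ZX]$ on $L$, with $\mathbb{E}[-ZX]:=\mathbb{E}[ZX^-]-\mathbb{E}[ZX^+]$ and $\mathbb{E}[-ZX]=\infty$ if $\mathbb{E}[ZX^-]=\infty$. $\mathcal{M}:=\{Z\in\mathcal{D}:\mathbb{E}[Z(R^i-r)]=0\ \forall i\}$, $\mathcal{P}:=\{Z\in\mathcal{M}:Z>0 \text{ a.s.}\}$. For $\tilde{\mathcal{Q}}\subset\mathcal{Q}$: POS: every $\tilde Z\in\tilde{\mathcal{Q}}$ satisfies $\tilde Z>0$ a.s.; MIX: $\lambda Z+(1-\lambda)\tilde Z\in\tilde{\mathcal{Q}}$ for all $Z\in\mathcal{Q}$, $\tilde Z\in\tilde{\mathcal{Q}}$, $\lambda\in(0,1)$; INT: for every $\tilde Z\in\tilde{\mathcal{Q}}$ there is an $L^\infty$-dense subset $\mathcal{E}$ of $\mathcal{D}\cap L^\infty$ such that for every $Z\in\mathcal{E}$ there is $\lambda\in(0,1)$ with $\lambda Z+(1-\lambda)\tilde Z\in\mathcal{Q}$. $\tilde{\mathcal{Q}}_{\max}$ is the set of $\tilde Z\in\mathcal{Q}$ with $\tilde Z>0$ a.s. for which there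 is an $L^\infty$-dense subset $\mathcal{E}$ of $\mathcal{D}\cap L^\infty$ such that for every $Z\in\mathcal{E}$ there is $\lambda\in(0,1)$ with $\lambda Z+(1-\lambda)\tilde Z\in\mathcal{Q}$. Strictly $\rho$-preferred, $\rho$-efficient: $\pi$ is $\rho$-efficient if $\mathbb{E}[X_\pi]\ge0$ and there is no $\pi'$ with $\mathbb{E}[X_{\pi'}]\ge\mathbb{E}[X_\pi]$, $\rho(X_{\pi'})\le\rho(X_\pi)$, one inequality strict. $\rho$-arbitrage: no $\rho$-efficient portfolio exists. *)

theory Defs
  imports "HOL-Probability.Probability"
begin

text \<open>One-period market. The risky assets are indexed by a finite type 'n (so d = CARD('n)).
  S0 i = S^i_0 (constants), S1 i = S^i_1 (random variables), r the riskless rate.\<close>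

definition ret :: "('n \<Rightarrow> real) \<Rightarrow> ('n \<Rightarrow> 'a \<Rightarrow> real) \<Rightarrow> 'n \<Rightarrow> 'a \<Rightarrow> real" where
  "ret S0 S1 i \<omega> = (S1 i \<omega> - S0 i) / S0 i"

definition excess :: "real \<Rightarrow> ('n::finite \<Rightarrow> real) \<Rightarrow> ('n \<Rightarrow> 'a \<Rightarrow> real) \<Rightarrow> ('n \<Rightarrow> real) \<Rightarrow> 'a \<Rightarrow> real" where
  "excess r S0 S1 p \<omega> = (\<Sum>i\<in>UNIV. p i * (ret S0 S1 i \<omega> - r))"

definition exp_negZ :: "'a measure \<Rightarrow> ('a \<Rightarrow> real) \<Rightarrow> ('a \<Rightarrow> real) \<Rightarrow> ereal" where
  "exp_negZ M Z X =
     (let a = (\<integral>\<^sup>+ \<omega>. ennreal (Z \<omega> * max 0 (- X \<omega>)) \<partial>M);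
          b = (\<integral>\<^sup>+ \<omega>. ennreal (Z \<omega> * max 0 (X \<omega>)) \<partial>M)
      in if a = \<infinity> then \<infinity> else enn2ereal a - enn2ereal b)"

definition rho :: "'a measure \<Rightarrow> ('a \<Rightarrow> real) set \<Rightarrow> ('a \<Rightarrow> real) \<Rightarrow> ereal" where
  "rho M Q X = (SUP Z\<in>Q. exp_negZ M Z X)"

definition Dens :: "'a measure \<Rightarrow> ('a \<Rightarrow> real) set" where
  "Dens M = {Z. integrable M Z \<and> (AE \<omega> in M. Z \<omega> \<ge> 0) \<and> integral\<^sup>L M Z = 1}"

definition Linf :: "'a measure \<Rightarrow> ('a \<Rightarrow> real) set" where
  "Linf M = {Z. Z \<in> borel_measurable M \<and> (\<exists>C. AE \<omega> in M. \<bar>Z \<omega>\<bar> \<le> C)}"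

definition Linf_dense_in_DLinf :: "'a measure \<Rightarrow> ('a \<Rightarrow> real) set \<Rightarrow> bool" where
  "Linf_dense_in_DLinf M E \<longleftrightarrow> E \<subseteq> Dens M \<inter> Linf M \<and>
     (\<forall>Z\<in>Dens M \<inter> Linf M. \<forall>\<epsilon>>0. \<exists>Z'\<in>E. AE \<omega> in M. \<bar>Z \<omega> - Z' \<omega>\<bar> \<le> \<epsilon>)"

text \<open>A set of random variables representing a set of L^1-classes: closed under a.s. equality.\<close>
definition ae_saturated :: "'a measure \<Rightarrow> ('a \<Rightarrow> real) set \<Rightarrow> bool" where
  "ae_saturated M A \<longleftrightarrow> (\<forall>Z\<in>A. \<forall>Z'. Z' \<in> borel_measurable M \<and> (AE \<omega> in M. Z \<omega> = Z' \<omega>) \<longrightarrow> Z' \<in> A)"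

definition mix :: "real \<Rightarrow> ('a \<Rightarrow> real) \<Rightarrow> ('a \<Rightarrow> real) \<Rightarrow> 'a \<Rightarrow> real" where
  "mix t Z Z' \<omega> = t * Z \<omega> + (1 - t) * Z' \<omega>"

definition Mset :: "'a measure \<Rightarrow> real \<Rightarrow> ('n \<Rightarrow> real) \<Rightarrow> ('n \<Rightarrow> 'a \<Rightarrow> real) \<Rightarrow> ('a \<Rightarrow> real) set" where
  "Mset M r S0 S1 = {Z\<in>Dens M. \<forall>i. integrable M (\<lambda>\<omega>. Z \<omega> * (ret S0 S1 i \<omega> - r)) \<and>
        (\<integral>\<omega>. Z \<omega> * (ret S0 S1 i \<omega> - r) \<partial>M) = 0}"

definition Pset :: "'a measure \<Rightarrow> real \<Rightarrow> ('n \<Rightarrow> real) \<Rightarrow> ('n \<Rightarrow> 'a \<Rightarrow> real) \<Rightarrow> ('a \<Rightarrow> real) set" where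
  "Pset M r S0 S1 = {Z\<in>Mset M r S0 S1. AE \<omega> in M. Z \<omega> > 0}"

definition Pi0 :: "'a measure \<Rightarrow> real \<Rightarrow> ('n::finite \<Rightarrow> real) \<Rightarrow> ('n \<Rightarrow> 'a \<Rightarrow> real) \<Rightarrow> ('n \<Rightarrow> real) set" where
  "Pi0 M r S0 S1 = {p. integral\<^sup>L M (excess r S0 S1 p) = 0}"

definition Pi0_rho :: "'a measure \<Rightarrow> ('a \<Rightarrow> real) set \<Rightarrow> real \<Rightarrow> ('n::finite \<Rightarrow> real) \<Rightarrow> ('n \<Rightarrow> 'a \<Rightarrow> real) \<Rightarrow> ('n \<Rightarrow> real) set" where
  "Pi0_rho M Q r S0 S1 = {p\<in>Pi0 M r S0 S1. rho M Q (excess r S0 S1 p) < \<infinity> \<and>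
      (\<forall>p'\<in>Pi0 M r S0 S1. rho M Q (excess r S0 S1 p) \<le> rho M Q (excess r S0 S1 p'))}"

definition rho_efficient :: "'a measure \<Rightarrow> ('a \<Rightarrow> real) set \<Rightarrow> real \<Rightarrow> ('n::finite \<Rightarrow> real) \<Rightarrow> ('n \<Rightarrow> 'a \<Rightarrow> real) \<Rightarrow> ('n \<Rightarrow> real) \<Rightarrow> bool" where
  "rho_efficient M Q r S0 S1 p \<longleftrightarrow>
     integral\<^sup>L M (excess r S0 S1 p) \<ge> 0 \<and>
     \<not> (\<exists>p'. integral\<^sup>L M (excess r S0 S1 p') \<ge> integral\<^sup>L M (excess r S0 S1 p) \<and>
             rho M Q (excess r S0 S1 p') \<le> rho M Q (excess r S0 S1 p) \<and>
             (integral\<^sup>L M (excess r S0 S1 p') > integral\<^sup>L M (excess r S0 S1 p) \<or>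
              rho M Q (excess r S0 S1 p') < rho M Q (excess r S0 S1 p)))"

definition rho_arbitrage :: "'a measure \<Rightarrow> ('a \<Rightarrow> real) set \<Rightarrow> real \<Rightarrow> ('n::finite \<Rightarrow> real) \<Rightarrow> ('n \<Rightarrow> 'a \<Rightarrow> real) \<Rightarrow> bool" where
  "rho_arbitrage M Q r S0 S1 \<longleftrightarrow> \<not> (\<exists>p. rho_efficient M Q r S0 S1 p)"

definition cond_POS :: "'a measure \<Rightarrow> ('a \<Rightarrow> real) set \<Rightarrow> bool" where
  "cond_POS M Qt \<longleftrightarrow> (\<forall>Z\<in>Qt. AE \<omega> in M. Z \<omega> > 0)"

definition cond_MIX :: "('a \<Rightarrow> real) set \<Rightarrow> ('a \<Rightarrow> real) set \<Rightarrow> bool" where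
  "cond_MIX Q Qt \<longleftrightarrow> (\<forall>Z\<in>Q. \<forall>Zt\<in>Qt. \<forall>t\<in>{0<..<1}. mix t Z Zt \<in> Qt)"

definition cond_INT :: "'a measure \<Rightarrow> ('a \<Rightarrow> real) set \<Rightarrow> ('a \<Rightarrow> real) set \<Rightarrow> bool" where
  "cond_INT M Q Qt \<longleftrightarrow> (\<forall>Zt\<in>Qt. \<exists>E. Linf_dense_in_DLinf M E \<and>
      (\<forall>Z\<in>E. \<exists>t\<in>{0<..<1}. mix t Z Zt \<in> Q))"

definition Qt_max :: "'a measure \<Rightarrow> ('a \<Rightarrow> real) set \<Rightarrow> ('a \<Rightarrow> real) set" where
  "Qt_max M Q = {Zt\<in>Q. (AE \<omega> in M. Zt \<omega> > 0) \<and> (\<exists>E. Linf_dense_in_DLinf M E \<and>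
      (\<forall>Z\<in>E. \<exists>t\<in>{0<..<1}. mix t Z Zt \<in> Q))}"

definition market :: "'a measure \<Rightarrow> real \<Rightarrow> ('n::finite \<Rightarrow> real) \<Rightarrow> ('n \<Rightarrow> 'a \<Rightarrow> real) \<Rightarrow> bool" where
  "market M r S0 S1 \<longleftrightarrow>
     prob_space M \<and> r > -1 \<and> (\<forall>i. S0 i > 0) \<and> (\<forall>i. S1 i \<in> borel_measurable M) \<and>
     \<comment> \<open>nonredundancy\<close>
     (\<forall>(th0::real) (th::'n \<Rightarrow> real).
        th0 + (\<Sum>i\<in>UNIV. th i * S0 i) = 0 \<and>
        (AE \<omega> in M. th0 * (1 + r) + (\<Sum>i\<in>UNIV. th i * S1 i \<omega>) = 0)
        \<longrightarrow> th0 = 0 \<and> (\<forall>i. th i = 0)) \<and>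
     (\<forall>i. integrable M (ret S0 S1 i)) \<and>
     (\<exists>i. integral\<^sup>L M (ret S0 S1 i) \<noteq> r)"

definition dual_set :: "'a measure \<Rightarrow> ('a \<Rightarrow> real) set \<Rightarrow> bool" where
  "dual_set M Q \<longleftrightarrow> Q \<subseteq> Dens M \<and> ae_saturated M Q \<and>
     (\<forall>Z1\<in>Q. \<forall>Z2\<in>Q. \<forall>t\<in>{0..1}. mix t Z1 Z2 \<in> Q) \<and> (\<lambda>_. 1) \<in> Q"

end

theory Submission
  imports Defs
begin

definition mv :: "'a measure \<Rightarrow> real \<Rightarrow> ('n \<Rightarrow> real) \<Rightarrow> ('n \<Rightarrow> 'a \<Rightarrow> real) \<Rightarrow> ('a \<Rightarrow> real) \<Rightarrow> 'n \<Rightarrow> real" where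
  "mv M r S0 S1 Z i = (\<integral>\<omega>. Z \<omega> * (ret S0 S1 i \<omega> - r) \<partial>M)"

lemma mkt_prob: "market M r S0 S1 \<Longrightarrow> prob_space M"
  by (simp add: market_def)

lemma mkt_ret_int: "market M r S0 S1 \<Longrightarrow> integrable M (ret S0 S1 i)"
  by (simp add: market_def)

lemma mkt_ret_r_int: "market M r S0 S1 \<Longrightarrow> integrable M (\<lambda>\<omega>. ret S0 S1 i \<omega> - r)"
proof -
  assume m: "market M r S0 S1"
  then interpret prob_space M by (rule mkt_prob)
  show ?thesis using mkt_ret_int[OF m] by auto
qed

lemma excess_int: assumes m: "market M r S0 S1" shows "integrable M (excess r S0 S1 p)"
proof -
  have "\<And>i. integrable M (\<lambda>\<omega>. p i * (ret S0 S1 i \<omega> - r))" using mkt_ret_r_int[OF m] by auto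
  then show ?thesis unfolding excess_def[abs_def] by (intro Bochner_Integration.integrable_sum) auto
qed

lemma excess_meas: "market M r S0 S1 \<Longrightarrow> excess r S0 S1 p \<in> borel_measurable M"
  using excess_int by blast

lemma excess_integral: assumes m: "market M r S0 S1" shows
   "integral\<^sup>L M (excess r S0 S1 p) = (\<Sum>i\<in>UNIV. p i * mv M r S0 S1 (\<lambda>_. 1) i)"
proof -
  have "\<And>i. integrable M (\<lambda>\<omega>. p i * (ret S0 S1 i \<omega> - r))" using mkt_ret_r_int[OF m] by auto
  then show ?thesis unfolding excess_def[abs_def] mv_def
    by (subst Bochner_Integration.integral_sum) auto
qed

lemma ZX_int:
  fixes p :: "'n::finite \<Rightarrow> real"
  assumes "\<And>i. integrable M (\<lambda>\<omega>. Z \<omega> * (ret S0 S1 i \<omega> - r))"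
  shows "integrable M (\<lambda>\<omega>. Z \<omega> * excess r S0 S1 p \<omega>)"
    and "(\<integral>\<omega>. Z \<omega> * excess r S0 S1 p \<omega> \<partial>M) = (\<Sum>i\<in>UNIV. p i * mv M r S0 S1 Z i)"
proof -
  have eq: "(\<lambda>\<omega>. Z \<omega> * excess r S0 S1 p \<omega>) = (\<lambda>\<omega>. \<Sum>i\<in>UNIV. p i * (Z \<omega> * (ret S0 S1 i \<omega> - r)))"
    unfolding excess_def by (auto simp: sum_distrib_left algebra_simps)
  show "integrable M (\<lambda>\<omega>. Z \<omega> * excess r S0 S1 p \<omega>)"
    unfolding eq using assms by auto
  show "(\<integral>\<omega>. Z \<omega> * excess r S0 S1 p \<omega> \<partial>M) = (\<Sum>i\<in>UNIV. p i * mv M r S0 S1 Z i)"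
    unfolding eq mv_def using assms by (subst Bochner_Integration.integral_sum) auto
qed

lemma Q_int:
  assumes mkt: "market M r S0 S1" and dual: "dual_set M Q"
    and condI: "\<forall>i. \<forall>Z\<in>Q. integrable M (\<lambda>\<omega>. Z \<omega> * ret S0 S1 i \<omega>)"
    and Z: "Z \<in> Q"
  shows "integrable M (\<lambda>\<omega>. Z \<omega> * (ret S0 S1 i \<omega> - r))"
proof -
  have "Z \<in> Dens M" using dual Z by (auto simp: dual_set_def)
  then have "integrable M Z" by (simp add: Dens_def)
  then have "integrable M (\<lambda>\<omega>. Z \<omega> * ret S0 S1 i \<omega> - r * Z \<omega>)"
    using condI Z by auto
  then show ?thesis by (simp add: algebra_simps)
qed

lemma exp_negZ_eq:
  fixes Z X :: "'a \<Rightarrow> real"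
  assumes Zm: "Z \<in> borel_measurable M" and Xm: "X \<in> borel_measurable M"
    and int: "integrable M (\<lambda>\<omega>. Z \<omega> * X \<omega>)" and pos: "AE \<omega> in M. Z \<omega> \<ge> 0"
  shows "exp_negZ M Z X = ereal (- (\<integral>\<omega>. Z \<omega> * X \<omega> \<partial>M))"
proof -
  have i1: "integrable M (\<lambda>\<omega>. Z \<omega> * max 0 (- X \<omega>))"
    by (rule Bochner_Integration.integrable_bound[OF int]) (use Zm Xm in \<open>auto simp: abs_mult intro!: mult_left_mono\<close>)
  have i2: "integrable M (\<lambda>\<omega>. Z \<omega> * max 0 (X \<omega>))"
    by (rule Bochner_Integration.integrable_bound[OF int]) (use Zm Xm in \<open>auto simp: abs_mult intro!: mult_left_mono\<close>)
  have a: "(\<integral>\<^sup>+ \<omega>. ennreal (Z \<omega> * max 0 (- X \<omega>)) \<partial>M) = ennreal (\<integral>\<omega>. Z \<omega> * max 0 (- X \<omega>) \<partial>M)"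
    by (rule nn_integral_eq_integral[OF i1]) (use pos in auto)
  have b: "(\<integral>\<^sup>+ \<omega>. ennreal (Z \<omega> * max 0 (X \<omega>)) \<partial>M) = ennreal (\<integral>\<omega>. Z \<omega> * max 0 (X \<omega>) \<partial>M)"
    by (rule nn_integral_eq_integral[OF i2]) (use pos in auto)
  have na: "(\<integral>\<omega>. Z \<omega> * max 0 (- X \<omega>) \<partial>M) \<ge> 0"
    by (rule integral_nonneg_AE) (use pos in auto)
  have nb: "(\<integral>\<omega>. Z \<omega> * max 0 (X \<omega>) \<partial>M) \<ge> 0"
    by (rule integral_nonneg_AE) (use pos in auto)
  have eq: "(\<integral>\<omega>. Z \<omega> * max 0 (- X \<omega>) \<partial>M) - (\<integral>\<omega>. Z \<omega> * max 0 (X \<omega>) \<partial>M) = - (\<integral>\<omega>. Z \<omega> * X \<omega> \<partial>M)"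
  proof -
    have "(\<integral>\<omega>. Z \<omega> * max 0 (- X \<omega>) \<partial>M) - (\<integral>\<omega>. Z \<omega> * max 0 (X \<omega>) \<partial>M)
        = (\<integral>\<omega>. Z \<omega> * max 0 (- X \<omega>) - Z \<omega> * max 0 (X \<omega>) \<partial>M)"
      using i1 i2 by simp
    also have "\<dots> = (\<integral>\<omega>. - (Z \<omega> * X \<omega>) \<partial>M)"
      by (rule Bochner_Integration.integral_cong) (auto simp: max_def algebra_simps)
    finally show ?thesis by simp
  qed
  show ?thesis
    unfolding exp_negZ_def Let_def a b using na nb eq
    by simp
qed

lemma exp_negZ_Q:
  assumes mkt: "market M r S0 S1" and dual: "dual_set M Q"
    and condI: "\<forall>i. \<forall>Z\<in>Q. integrable M (\<lambda>\<omega>. Z \<omega> * ret S0 S1 i \<omega>)"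
    and Z: "Z \<in> Q"
  shows "exp_negZ M Z (excess r S0 S1 p) = ereal (- (\<Sum>i\<in>UNIV. p i * mv M r S0 S1 Z i))"
proof -
  have D: "Z \<in> Dens M" using dual Z by (auto simp: dual_set_def)
  have ii: "\<And>i. integrable M (\<lambda>\<omega>. Z \<omega> * (ret S0 S1 i \<omega> - r))"
    using Q_int[OF mkt dual condI Z] .
  show ?thesis
    apply (subst exp_negZ_eq)
    using D ZX_int[OF ii, of p] excess_meas[OF mkt] by (auto simp: Dens_def)
qed

lemma rho_zero:
  assumes "Q \<noteq> {}" shows "rho M Q (\<lambda>_. 0) = 0"
proof -
  have "exp_negZ M Z (\<lambda>_. 0) = 0" for Z
    unfolding exp_negZ_def Let_def by simp
  then show ?thesis unfolding rho_def using assms by simp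
qed

lemma excess_zero: "excess r S0 S1 (\<lambda>_. 0) = (\<lambda>_. 0)"
  by (simp add: excess_def[abs_def])

lemma excess_add: "excess r S0 S1 (\<lambda>i. p i + q i) = (\<lambda>\<omega>. excess r S0 S1 p \<omega> + excess r S0 S1 q \<omega>)"
  by (simp add: excess_def[abs_def] sum.distrib[symmetric] algebra_simps)

lemma nonred:
  fixes p :: "'n::finite \<Rightarrow> real"
  assumes mkt: "market M r S0 S1" and p: "p \<noteq> (\<lambda>_. 0)"
  shows "\<not> (AE \<omega> in M. excess r S0 S1 p \<omega> = 0)"
proof
  assume ae: "AE \<omega> in M. excess r S0 S1 p \<omega> = 0"
  define th where "th = (\<lambda>i. p i / S0 i)"
  define th0 where "th0 = - (\<Sum>i\<in>UNIV. p i)"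
  have S0pos: "\<And>i. S0 i > 0" using mkt by (simp add: market_def)
  have e1: "th0 + (\<Sum>i\<in>UNIV. th i * S0 i) = 0"
    unfolding th_def th0_def using S0pos by (simp add: less_imp_neq[symmetric])
  have eqw: "th0 * (1 + r) + (\<Sum>i\<in>UNIV. th i * S1 i \<omega>) = excess r S0 S1 p \<omega>" for \<omega>
  proof -
    have "excess r S0 S1 p \<omega> = (\<Sum>i\<in>UNIV. th i * S1 i \<omega> - p i - r * p i)"
      unfolding excess_def ret_def th_def
      by (rule sum.cong) (use S0pos in \<open>auto simp: field_simps less_imp_neq[symmetric]\<close>)
    also have "\<dots> = th0 * (1 + r) + (\<Sum>i\<in>UNIV. th i * S1 i \<omega>)"
      unfolding th0_def by (simp add: sum_subtractf sum_distrib_left algebra_simps)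
    finally show ?thesis by simp
  qed
  have e2: "AE \<omega> in M. th0 * (1 + r) + (\<Sum>i\<in>UNIV. th i * S1 i \<omega>) = 0"
    using ae by (simp add: eqw)
  have "\<forall>i. th i = 0" using mkt e1 e2 unfolding market_def by blast
  then have "\<forall>i. p i = 0" unfolding th_def using S0pos by (simp add: less_imp_neq[symmetric])
  then show False using p by auto
qed


lemma B1:
  fixes S0 :: "'n::finite \<Rightarrow> real"
  assumes mkt: "market M r S0 S1" and dual: "dual_set M Q"
    and condI: "\<forall>i. \<forall>Z\<in>Q. integrable M (\<lambda>\<omega>. Z \<omega> * ret S0 S1 i \<omega>)"
    and Pi0rho: "Pi0_rho M Q r S0 S1 = {(\<lambda>_. 0)}"
    and noarb: "\<not> rho_arbitrage M Q r S0 S1"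
    and q: "q \<noteq> (\<lambda>_. 0)"
  shows "\<exists>Z\<in>Q. (\<Sum>i\<in>UNIV. q i * mv M r S0 S1 Z i) < 0"
proof (rule ccontr)
  assume "\<not> ?thesis"
  then have ge: "\<And>Z. Z \<in> Q \<Longrightarrow> (\<Sum>i\<in>UNIV. q i * mv M r S0 S1 Z i) \<ge> 0" by force
  have one: "(\<lambda>_. 1) \<in> Q" using dual by (simp add: dual_set_def)
  let ?X = "excess r S0 S1"
  have rle: "rho M Q (?X q) \<le> 0"
    unfolding rho_def
  proof (rule SUP_least)
    fix Z assume "Z \<in> Q"
    then show "exp_negZ M Z (?X q) \<le> 0"
      using exp_negZ_Q[OF mkt dual condI, of Z q] ge[of Z] by (simp add: zero_ereal_def)
  qed
  have rge: "rho M Q (?X p) \<ge> ereal (- integral\<^sup>L M (?X p))" for p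
  proof -
    have "rho M Q (?X p) \<ge> exp_negZ M (\<lambda>_. 1) (?X p)"
      unfolding rho_def using one by (rule SUP_upper)
    then show ?thesis using exp_negZ_Q[OF mkt dual condI one, of p] excess_integral[OF mkt, of p] by simp
  qed
  define a where "a = integral\<^sup>L M (?X q)"
  have a_ge: "a \<ge> 0" using ge[OF one] excess_integral[OF mkt, of q] by (simp add: a_def)
  show False
  proof (cases "a = 0")
    case True
    have "q \<in> Pi0_rho M Q r S0 S1"
      unfolding Pi0_rho_def Pi0_def
    proof (intro CollectI conjI ballI)
      show "integral\<^sup>L M (?X q) = 0" using True a_def by simp
      show "rho M Q (?X q) < \<infinity>" using le_less_trans[OF rle, of \<infinity>] by simp
      fix p' assume "p' \<in> {p. integral\<^sup>L M (?X p) = 0}"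
      then have "rho M Q (?X p') \<ge> 0" using rge[of p'] by (simp add: zero_ereal_def)
      then show "rho M Q (?X q) \<le> rho M Q (?X p')" using rle by simp
    qed
    then show False using Pi0rho q by simp
  next
    case False
    then have apos: "a > 0" using a_ge by simp
    have "rho_arbitrage M Q r S0 S1"
      unfolding rho_arbitrage_def
    proof
      assume "\<exists>p. rho_efficient M Q r S0 S1 p"
      then obtain p where eff: "rho_efficient M Q r S0 S1 p" by blast
      define p' where "p' = (\<lambda>i. p i + q i)"
      have "integral\<^sup>L M (?X p') = integral\<^sup>L M (?X p) + a"
        unfolding p'_def a_def excess_add using excess_int[OF mkt] by simp
      then have i1: "integral\<^sup>L M (?X p') > integral\<^sup>L M (?X p)" using apos by simp
      have "rho M Q (?X p') \<le> rho M Q (?X p)"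
        unfolding rho_def
      proof (rule SUP_mono)
        fix Z assume Z: "Z \<in> Q"
        show "\<exists>Z'\<in>Q. exp_negZ M Z (?X p') \<le> exp_negZ M Z' (?X p)"
        proof (rule bexI[OF _ Z])
        have "(\<Sum>i\<in>UNIV. p' i * mv M r S0 S1 Z i) = (\<Sum>i\<in>UNIV. p i * mv M r S0 S1 Z i) + (\<Sum>i\<in>UNIV. q i * mv M r S0 S1 Z i)"
          unfolding p'_def by (simp add: sum.distrib distrib_right)
        then show "exp_negZ M Z (?X p') \<le> exp_negZ M Z (?X p)"
          using exp_negZ_Q[OF mkt dual condI Z] ge[OF Z] by simp
        qed
      qed
      then have ex: "\<exists>p''. integral\<^sup>L M (?X p'') \<ge> integral\<^sup>L M (?X p) \<and> rho M Q (?X p'') \<le> rho M Q (?X p) \<and>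
          (integral\<^sup>L M (?X p'') > integral\<^sup>L M (?X p) \<or> rho M Q (?X p'') < rho M Q (?X p))"
        using i1 by (intro exI[of _ p']) simp
      show False using eff ex unfolding rho_efficient_def by blast
    qed
    then show False using noarb by simp
  qed
qed

lemma geom:
  fixes C :: "(real^'n) set"
  assumes cv: "convex C" and ne: "C \<noteq> {}" and H: "\<forall>a. a \<noteq> 0 \<longrightarrow> (\<exists>c\<in>C. inner a c < 0)"
  shows "\<exists>s>0. (- s) *\<^sub>R v \<in> C"
proof (rule ccontr)
  assume nc: "\<not> ?thesis"
  define T where "T = (\<lambda>s. (- s) *\<^sub>R v) ` {0<..}"
  have cT: "convex T" unfolding T_def
    by (rule convex_linear_image) (auto intro: linearI simp: algebra_simps)
  have neT: "T \<noteq> {}" unfolding T_def by auto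
  have dj: "T \<inter> C = {}" using nc unfolding T_def by auto
  obtain a b where a: "a \<noteq> 0" and aT: "\<forall>x\<in>T. inner a x \<le> b" and aC: "\<forall>x\<in>C. inner a x \<ge> b"
    using separating_hyperplane_sets[OF cT cv neT ne dj] by blast
  have b0: "b \<ge> 0"
  proof (rule ccontr)
    assume "\<not> b \<ge> 0"
    then have bn: "b < 0" by simp
    define s where "s = - b / (2 * (\<bar>inner a v\<bar> + 1))"
    have dpos: "2 * (\<bar>inner a v\<bar> + 1) > 0" by (simp add: add_pos_nonneg)
    have s0: "s > 0" unfolding s_def using bn dpos by (intro divide_pos_pos) auto
    have "(- s) *\<^sub>R v \<in> T" unfolding T_def using s0 by auto
    then have le: "- s * inner a v \<le> b" using aT by auto
    have "s * \<bar>inner a v\<bar> < - b"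
    proof -
      have "s * \<bar>inner a v\<bar> = - b * (\<bar>inner a v\<bar> / (2 * (\<bar>inner a v\<bar> + 1)))"
        unfolding s_def by simp
      also have "\<dots> < - b * 1"
        using bn by (intro mult_strict_left_mono) (auto simp: field_simps)
      finally show ?thesis by simp
    qed
    moreover have "- s * inner a v \<ge> - (s * \<bar>inner a v\<bar>)"
      using s0 by (simp add: abs_le_iff mult_left_mono)
    ultimately show False using le by simp
  qed
  obtain c where "c \<in> C" "inner a c < 0" using H a by blast
  then show False using aC b0 by force
qed


lemma mv_mix:
  assumes "integrable M (\<lambda>\<omega>. Z1 \<omega> * (ret S0 S1 i \<omega> - r))" "integrable M (\<lambda>\<omega>. Z2 \<omega> * (ret S0 S1 i \<omega> - r))"
  shows "mv M r S0 S1 (mix t Z1 Z2) i = t * mv M r S0 S1 Z1 i + (1 - t) * mv M r S0 S1 Z2 i"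
proof -
  have "(\<lambda>\<omega>. mix t Z1 Z2 \<omega> * (ret S0 S1 i \<omega> - r)) = (\<lambda>\<omega>. t * (Z1 \<omega> * (ret S0 S1 i \<omega> - r)) + (1 - t) * (Z2 \<omega> * (ret S0 S1 i \<omega> - r)))"
    by (auto simp: mix_def algebra_simps)
  then show ?thesis unfolding mv_def using assms by simp
qed

lemma B:
  fixes S0 :: "'n::finite \<Rightarrow> real"
  assumes mkt: "market M r S0 S1" and dual: "dual_set M Q"
    and condI: "\<forall>i. \<forall>Z\<in>Q. integrable M (\<lambda>\<omega>. Z \<omega> * ret S0 S1 i \<omega>)"
    and H: "\<And>q. q \<noteq> (\<lambda>_. 0) \<Longrightarrow> \<exists>Z\<in>Q. (\<Sum>i\<in>UNIV. q i * mv M r S0 S1 Z i) < 0"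
    and sub: "Qt \<subseteq> Q" and Zt: "Zt \<in> Qt" and pos: "cond_POS M Qt" and mx: "cond_MIX Q Qt"
  shows "Qt \<inter> Pset M r S0 S1 \<noteq> {}"
proof -
  define f where "f = (\<lambda>Z. (\<chi> i. mv M r S0 S1 Z i) :: real^'n)"
  define C where "C = f ` Q"
  have Qint: "\<And>Z i. Z \<in> Q \<Longrightarrow> integrable M (\<lambda>\<omega>. Z \<omega> * (ret S0 S1 i \<omega> - r))"
    using Q_int[OF mkt dual condI] by blast
  have Qmix: "\<And>Z1 Z2 t. Z1 \<in> Q \<Longrightarrow> Z2 \<in> Q \<Longrightarrow> t \<in> {0..1} \<Longrightarrow> mix t Z1 Z2 \<in> Q"
    using dual by (simp add: dual_set_def)
  have cv: "convex C"
    unfolding C_def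
  proof (rule convexI)
    fix x y and u v :: real
    assume x: "x \<in> f ` Q" and y: "y \<in> f ` Q" and uv0: "0 \<le> u" "0 \<le> v" "u + v = 1"
    then have uv: "0 \<le> u \<and> 0 \<le> v \<and> u + v = 1" by simp
    obtain Z1 Z2 where Z1: "Z1 \<in> Q" "x = f Z1" and Z2: "Z2 \<in> Q" "y = f Z2" using x y by blast
    have "u *\<^sub>R x + v *\<^sub>R y = f (mix u Z1 Z2)"
      unfolding f_def Z1 Z2 using uv
      by (auto simp: vec_eq_iff mv_mix[OF Qint[OF Z1(1)] Qint[OF Z2(1)]])
    moreover have "mix u Z1 Z2 \<in> Q" using Qmix[OF Z1(1) Z2(1)] uv by auto
    ultimately show "u *\<^sub>R x + v *\<^sub>R y \<in> f ` Q" by blast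
  qed
  have ne: "C \<noteq> {}" using Zt sub unfolding C_def by auto
  have inn: "inner a (f Z) = (\<Sum>i\<in>UNIV. (a $ i) * mv M r S0 S1 Z i)" for a Z
    unfolding f_def inner_vec_def by simp
  have H': "\<forall>a. a \<noteq> 0 \<longrightarrow> (\<exists>c\<in>C. inner a c < 0)"
  proof (intro allI impI)
    fix a :: "real^'n" assume a: "a \<noteq> 0"
    have "(\<lambda>i. a $ i) \<noteq> (\<lambda>_. 0)" using a by (auto simp: vec_eq_iff)
    then obtain Z where "Z \<in> Q" "(\<Sum>i\<in>UNIV. (a $ i) * mv M r S0 S1 Z i) < 0" using H by blast
    then show "\<exists>c\<in>C. inner a c < 0" unfolding C_def using inn by auto
  qed
  obtain s where s: "s > 0" "(- s) *\<^sub>R f Zt \<in> C" using geom[OF cv ne H'] by blast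
  then obtain Z where Z: "Z \<in> Q" "f Z = (- s) *\<^sub>R f Zt" unfolding C_def by auto
  have mvZ: "mv M r S0 S1 Z i = - s * mv M r S0 S1 Zt i" for i
    using Z(2) unfolding f_def by (auto simp: vec_eq_iff)
  define t where "t = 1 / (1 + s)"
  have t: "t \<in> {0<..<1}" unfolding t_def using s by auto
  have ts: "t * s = 1 - t" unfolding t_def using s by (simp add: field_simps)
  define W where "W = mix t Z Zt"
  have WQt: "W \<in> Qt" unfolding W_def using mx Z(1) Zt t unfolding cond_MIX_def by blast
  then have WQ: "W \<in> Q" using sub by auto
  have ZtQ: "Zt \<in> Q" using sub Zt by auto
  have mvW: "mv M r S0 S1 W i = 0" for i
  proof -
    have "mv M r S0 S1 W i = t * mv M r S0 S1 Z i + (1 - t) * mv M r S0 S1 Zt i"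
      unfolding W_def by (rule mv_mix[OF Qint[OF Z(1)] Qint[OF ZtQ]])
    also have "\<dots> = (1 - t - t * s) * mv M r S0 S1 Zt i" by (simp add: mvZ algebra_simps)
    finally show ?thesis using ts by simp
  qed
  have "W \<in> Pset M r S0 S1"
    unfolding Pset_def Mset_def
    using WQ dual Qint[OF WQ] mvW pos WQt
    by (auto simp: dual_set_def cond_POS_def mv_def)
  then show ?thesis using WQt by blast
qed


lemma bdd_int:
  fixes Z X :: "'a \<Rightarrow> real"
  assumes Zm: "Z \<in> borel_measurable M" and Zb: "AE \<omega> in M. \<bar>Z \<omega>\<bar> \<le> C" and X: "integrable M X"
  shows "integrable M (\<lambda>\<omega>. Z \<omega> * X \<omega>)"
proof (rule Bochner_Integration.integrable_bound[of _ "\<lambda>\<omega>. C * \<bar>X \<omega>\<bar>"])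
  show "integrable M (\<lambda>\<omega>. C * \<bar>X \<omega>\<bar>)" using X by auto
  show "(\<lambda>\<omega>. Z \<omega> * X \<omega>) \<in> borel_measurable M" using Zm X by auto
  show "AE \<omega> in M. norm (Z \<omega> * X \<omega>) \<le> norm (C * \<bar>X \<omega>\<bar>)"
    using Zb by eventually_elim (auto simp: abs_mult intro!: mult_right_mono)
qed

lemma A1:
  fixes S0 :: "'n::finite \<Rightarrow> real"
  assumes mkt: "market M r S0 S1" and Zt: "Zt \<in> Pset M r S0 S1"
    and dense: "Linf_dense_in_DLinf M E" and p: "p \<noteq> (\<lambda>_. 0)"
  shows "\<exists>Z\<in>E. integrable M (\<lambda>\<omega>. Z \<omega> * excess r S0 S1 p \<omega>) \<and> (\<integral>\<omega>. Z \<omega> * excess r S0 S1 p \<omega> \<partial>M) < 0"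
proof -
  interpret prob_space M using mkt by (rule mkt_prob)
  define X where "X = excess r S0 S1 p"
  have Xi: "integrable M X" unfolding X_def using excess_int[OF mkt] .
  then have Xm[measurable]: "X \<in> borel_measurable M" by blast
  have ZtD: "Zt \<in> Dens M" and Ztpos: "AE \<omega> in M. Zt \<omega> > 0"
    and Ztm: "\<And>i. integrable M (\<lambda>\<omega>. Zt \<omega> * (ret S0 S1 i \<omega> - r))"
    and Zt0: "\<And>i. mv M r S0 S1 Zt i = 0"
    using Zt by (auto simp: Pset_def Mset_def mv_def)
  have ZtXi: "integrable M (\<lambda>\<omega>. Zt \<omega> * X \<omega>)" unfolding X_def by (rule ZX_int(1)[OF Ztm])
  have ZtX0: "(\<integral>\<omega>. Zt \<omega> * X \<omega> \<partial>M) = 0" unfolding X_def ZX_int(2)[OF Ztm] Zt0 by simp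
  have nn: "\<not> (AE \<omega> in M. X \<omega> \<ge> 0)"
  proof
    assume ae: "AE \<omega> in M. X \<omega> \<ge> 0"
    have "AE \<omega> in M. Zt \<omega> * X \<omega> \<ge> 0" using ae Ztpos by eventually_elim auto
    then have "AE \<omega> in M. Zt \<omega> * X \<omega> = 0" using integral_nonneg_eq_0_iff_AE[OF ZtXi] ZtX0 by simp
    then have "AE \<omega> in M. X \<omega> = 0" using Ztpos by eventually_elim auto
    then show False using nonred[OF mkt p] unfolding X_def by simp
  qed
  define A where "A = {\<omega>\<in>space M. X \<omega> < 0}"
  have A[measurable]: "A \<in> sets M" unfolding A_def by measurable
  have pA: "prob A > 0"
  proof (rule ccontr)
    assume "\<not> prob A > 0"
    then have "prob A = 0" using measure_nonneg[of M A] by linarith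
    then have "AE \<omega> in M. \<omega> \<notin> A" using prob_eq_0[OF A] by simp
    then have "AE \<omega> in M. X \<omega> \<ge> 0" using AE_space by eventually_elim (auto simp: A_def)
    then show False using nn by simp
  qed
  define Z0 where "Z0 = (\<lambda>\<omega>. indicator A \<omega> / prob A)"
  have Z0m: "Z0 \<in> borel_measurable M" unfolding Z0_def by measurable
  have Z0b: "AE \<omega> in M. \<bar>Z0 \<omega>\<bar> \<le> 1 / prob A"
    unfolding Z0_def using pA by (auto simp: indicator_def)
  have Z0D: "Z0 \<in> Dens M \<inter> Linf M"
  proof -
    have "integrable M Z0" unfolding Z0_def by (intro integrable_divide_zero integrable_real_indicator A) (simp add: less_top[symmetric])
    moreover have "integral\<^sup>L M Z0 = 1" unfolding Z0_def using pA by simp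
    moreover have "AE \<omega> in M. Z0 \<omega> \<ge> 0" unfolding Z0_def by (simp add: indicator_def)
    ultimately show ?thesis using Z0m Z0b by (auto simp: Dens_def Linf_def)
  qed
  define J where "J = (\<integral>\<omega>. indicator A \<omega> * X \<omega> \<partial>M)"
  have iAX: "integrable M (\<lambda>\<omega>. indicator A \<omega> * X \<omega>)"
    using integrable_real_mult_indicator[OF A Xi] by (simp add: mult.commute)
  have Jle: "J \<le> 0"
  proof -
    have "0 \<le> (\<integral>\<omega>. - (indicator A \<omega> * X \<omega>) \<partial>M)"
      by (rule integral_nonneg_AE) (auto simp: A_def indicator_def)
    then show ?thesis unfolding J_def by simp
  qed
  have Jne: "J \<noteq> 0"
  proof
    assume J0: "J = 0"
    have "(\<integral>\<omega>. - (indicator A \<omega> * X \<omega>) \<partial>M) = 0" using J0 unfolding J_def by simp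
    moreover have "AE \<omega> in M. 0 \<le> - (indicator A \<omega> * X \<omega>)" by (auto simp: A_def indicator_def)
    ultimately have "AE \<omega> in M. - (indicator A \<omega> * X \<omega>) = 0"
      using integral_nonneg_eq_0_iff_AE[of M "\<lambda>\<omega>. - (indicator A \<omega> * X \<omega>)"] iAX by simp
    then have "AE \<omega> in M. \<omega> \<notin> A" by eventually_elim (auto simp: A_def indicator_def)
    then have "prob A = 0" using prob_eq_0[OF A] by simp
    then show False using pA by simp
  qed
  have Z0Xi: "integrable M (\<lambda>\<omega>. Z0 \<omega> * X \<omega>)" by (rule bdd_int[OF Z0m Z0b Xi])
  have Z0X: "(\<integral>\<omega>. Z0 \<omega> * X \<omega> \<partial>M) = J / prob A"
    unfolding Z0_def J_def by simp
  define \<delta> where "\<delta> = - (J / prob A)"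
  have \<delta>: "\<delta> > 0" unfolding \<delta>_def using Jle Jne pA by (simp add: divide_neg_pos)
  define K where "K = (\<integral>\<omega>. \<bar>X \<omega>\<bar> \<partial>M)"
  have K0: "K \<ge> 0" unfolding K_def by simp
  define \<epsilon> where "\<epsilon> = \<delta> / (2 * (K + 1))"
  have \<epsilon>: "\<epsilon> > 0" unfolding \<epsilon>_def using \<delta> K0 by simp
  obtain Z where Z: "Z \<in> E" and Zc: "AE \<omega> in M. \<bar>Z0 \<omega> - Z \<omega>\<bar> \<le> \<epsilon>"
    using dense Z0D \<epsilon> unfolding Linf_dense_in_DLinf_def by blast
  have "Z \<in> Linf M" using dense Z unfolding Linf_dense_in_DLinf_def by blast
  then obtain Cz where Zm: "Z \<in> borel_measurable M" and Zb: "AE \<omega> in M. \<bar>Z \<omega>\<bar> \<le> Cz"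
    unfolding Linf_def by blast
  have ZXi: "integrable M (\<lambda>\<omega>. Z \<omega> * X \<omega>)" by (rule bdd_int[OF Zm Zb Xi])
  have "(\<integral>\<omega>. Z \<omega> * X \<omega> \<partial>M) - (\<integral>\<omega>. Z0 \<omega> * X \<omega> \<partial>M) = (\<integral>\<omega>. Z \<omega> * X \<omega> - Z0 \<omega> * X \<omega> \<partial>M)"
    using ZXi Z0Xi by simp
  also have "\<dots> \<le> (\<integral>\<omega>. \<epsilon> * \<bar>X \<omega>\<bar> \<partial>M)"
  proof (rule integral_mono_AE)
    show "integrable M (\<lambda>\<omega>. Z \<omega> * X \<omega> - Z0 \<omega> * X \<omega>)" using ZXi Z0Xi by simp
    show "integrable M (\<lambda>\<omega>. \<epsilon> * \<bar>X \<omega>\<bar>)" using Xi by simp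
    show "AE \<omega> in M. Z \<omega> * X \<omega> - Z0 \<omega> * X \<omega> \<le> \<epsilon> * \<bar>X \<omega>\<bar>"
      using Zc
    proof eventually_elim
      case (elim \<omega>)
      have "Z \<omega> * X \<omega> - Z0 \<omega> * X \<omega> = (Z \<omega> - Z0 \<omega>) * X \<omega>" by (simp add: algebra_simps)
      also have "\<dots> \<le> \<bar>Z \<omega> - Z0 \<omega>\<bar> * \<bar>X \<omega>\<bar>" by (metis abs_ge_self abs_mult)
      also have "\<dots> \<le> \<epsilon> * \<bar>X \<omega>\<bar>" using elim by (intro mult_right_mono) (auto simp: abs_minus_commute)
      finally show ?case .
    qed
  qed
  also have "\<dots> = \<epsilon> * K" unfolding K_def by simp
  finally have "(\<integral>\<omega>. Z \<omega> * X \<omega> \<partial>M) \<le> - \<delta> + \<epsilon> * K" using Z0X unfolding \<delta>_def by simp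
  moreover have "\<epsilon> * K < \<delta>"
  proof -
    have "\<epsilon> * K = \<delta> * (K / (2 * (K + 1)))" unfolding \<epsilon>_def by simp
    also have "\<dots> < \<delta> * 1" using \<delta> K0 by (intro mult_strict_left_mono) (auto simp: field_simps)
    finally show ?thesis by simp
  qed
  ultimately have "(\<integral>\<omega>. Z \<omega> * X \<omega> \<partial>M) < 0" by simp
  then show ?thesis using Z ZXi unfolding X_def by blast
qed


lemma A:
  fixes S0 :: "'n::finite \<Rightarrow> real"
  assumes mkt: "market M r S0 S1" and dual: "dual_set M Q"
    and condI: "\<forall>i. \<forall>Z\<in>Q. integrable M (\<lambda>\<omega>. Z \<omega> * ret S0 S1 i \<omega>)"
    and ZtQ: "Zt \<in> Q" and ZtP: "Zt \<in> Pset M r S0 S1"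
    and dense: "Linf_dense_in_DLinf M E" and EQ: "\<forall>Z\<in>E. \<exists>t\<in>{0<..<1}. mix t Z Zt \<in> Q"
  shows "\<not> rho_arbitrage M Q r S0 S1"
proof -
  let ?X = "excess r S0 S1"
  have r0: "rho M Q (?X (\<lambda>_. 0)) = 0" unfolding excess_zero using ZtQ by (intro rho_zero) auto
  have key: "rho M Q (?X p') > 0" if p': "p' \<noteq> (\<lambda>_. 0)" for p'
  proof -
    obtain Z where Z: "Z \<in> E" and ZXi: "integrable M (\<lambda>\<omega>. Z \<omega> * ?X p' \<omega>)"
      and ZXn: "(\<integral>\<omega>. Z \<omega> * ?X p' \<omega> \<partial>M) < 0"
      using A1[OF mkt ZtP dense p'] by blast
    obtain t where t: "t \<in> {0<..<1}" and WQ: "mix t Z Zt \<in> Q" using EQ Z by blast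
    have Ztm: "\<And>i. integrable M (\<lambda>\<omega>. Zt \<omega> * (ret S0 S1 i \<omega> - r))"
      and Zt0: "\<And>i. mv M r S0 S1 Zt i = 0"
      using ZtP by (auto simp: Pset_def Mset_def mv_def)
    have ZtXi: "integrable M (\<lambda>\<omega>. Zt \<omega> * ?X p' \<omega>)" by (rule ZX_int(1)[OF Ztm])
    have ZtX0: "(\<integral>\<omega>. Zt \<omega> * ?X p' \<omega> \<partial>M) = 0" unfolding ZX_int(2)[OF Ztm] Zt0 by simp
    have eqf: "(\<lambda>\<omega>. mix t Z Zt \<omega> * ?X p' \<omega>) = (\<lambda>\<omega>. t * (Z \<omega> * ?X p' \<omega>) + (1 - t) * (Zt \<omega> * ?X p' \<omega>))"
      by (auto simp: mix_def algebra_simps)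
    have "(\<integral>\<omega>. mix t Z Zt \<omega> * ?X p' \<omega> \<partial>M) = t * (\<integral>\<omega>. Z \<omega> * ?X p' \<omega> \<partial>M)"
      unfolding eqf using ZXi ZtXi ZtX0 by simp
    also have "\<dots> < 0" using t ZXn by (simp add: mult_pos_neg)
    finally have neg: "(\<integral>\<omega>. mix t Z Zt \<omega> * ?X p' \<omega> \<partial>M) < 0" .
    have "(\<integral>\<omega>. mix t Z Zt \<omega> * ?X p' \<omega> \<partial>M) = (\<Sum>i\<in>UNIV. p' i * mv M r S0 S1 (mix t Z Zt) i)"
      by (rule ZX_int(2)) (rule Q_int[OF mkt dual condI WQ])
    then have "exp_negZ M (mix t Z Zt) (?X p') > 0"
      using exp_negZ_Q[OF mkt dual condI WQ, of p'] neg by simp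
    also have "exp_negZ M (mix t Z Zt) (?X p') \<le> rho M Q (?X p')"
      unfolding rho_def using WQ by (rule SUP_upper)
    finally show ?thesis .
  qed
  have "rho_efficient M Q r S0 S1 (\<lambda>_. 0)"
    unfolding rho_efficient_def
  proof (intro conjI notI)
    show "integral\<^sup>L M (?X (\<lambda>_. 0)) \<ge> 0" unfolding excess_zero by simp
    assume "\<exists>p'. integral\<^sup>L M (?X p') \<ge> integral\<^sup>L M (?X (\<lambda>_. 0)) \<and>
             rho M Q (?X p') \<le> rho M Q (?X (\<lambda>_. 0)) \<and>
             (integral\<^sup>L M (?X p') > integral\<^sup>L M (?X (\<lambda>_. 0)) \<or> rho M Q (?X p') < rho M Q (?X (\<lambda>_. 0)))"
    then obtain p' where le: "rho M Q (?X p') \<le> rho M Q (?X (\<lambda>_. 0))"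
      and st: "integral\<^sup>L M (?X p') > integral\<^sup>L M (?X (\<lambda>_. 0)) \<or> rho M Q (?X p') < rho M Q (?X (\<lambda>_. 0))"
      by blast
    show False
    proof (cases "p' = (\<lambda>_. 0)")
      case True then show False using st by simp
    next
      case False
      then have "rho M Q (?X p') > 0" by (rule key)
      then show False using le r0 by simp
    qed
  qed
  then show ?thesis unfolding rho_arbitrage_def by blast
qed


lemma Qtmax_props:
  assumes dual: "dual_set M Q"
  shows "Qt_max M Q \<subseteq> Q" "ae_saturated M (Qt_max M Q)" "cond_POS M (Qt_max M Q)"
    "cond_MIX Q (Qt_max M Q)" "cond_INT M Q (Qt_max M Q)"
proof -
  have QD: "Q \<subseteq> Dens M" and Qsat: "ae_saturated M Q"
    and Qmix: "\<And>Z1 Z2 t. Z1 \<in> Q \<Longrightarrow> Z2 \<in> Q \<Longrightarrow> t \<in> {0..1} \<Longrightarrow> mix t Z1 Z2 \<in> Q"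
    using dual by (auto simp: dual_set_def)
  show "Qt_max M Q \<subseteq> Q" by (auto simp: Qt_max_def)
  show "cond_POS M (Qt_max M Q)" by (auto simp: Qt_max_def cond_POS_def)
  show "cond_INT M Q (Qt_max M Q)" by (auto simp: Qt_max_def cond_INT_def)
  show "ae_saturated M (Qt_max M Q)"
    unfolding ae_saturated_def
  proof (intro ballI allI impI)
    fix Zt Z' assume Zt: "Zt \<in> Qt_max M Q" and Z': "Z' \<in> borel_measurable M \<and> (AE \<omega> in M. Zt \<omega> = Z' \<omega>)"
    from Zt obtain E where ZtQ: "Zt \<in> Q" and pos: "AE \<omega> in M. Zt \<omega> > 0" and dE: "Linf_dense_in_DLinf M E"
      and EQ: "\<forall>Z\<in>E. \<exists>t\<in>{0<..<1}. mix t Z Zt \<in> Q" unfolding Qt_max_def by blast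
    have Z'Q: "Z' \<in> Q" using Qsat ZtQ Z' unfolding ae_saturated_def by blast
    have Z'pos: "AE \<omega> in M. Z' \<omega> > 0" using pos Z' by auto
    have "\<forall>Z\<in>E. \<exists>t\<in>{0<..<1}. mix t Z Z' \<in> Q"
    proof
      fix Z assume Z: "Z \<in> E"
      then obtain t where t: "t \<in> {0<..<1}" and m: "mix t Z Zt \<in> Q" using EQ by blast
      have "Z \<in> Dens M" using dE Z unfolding Linf_dense_in_DLinf_def by blast
      then have Zm: "Z \<in> borel_measurable M" by (auto simp: Dens_def)
      have Z'm: "Z' \<in> borel_measurable M" using Z' by blast
      have "mix t Z Z' \<in> borel_measurable M" unfolding mix_def[abs_def] using Zm Z'm by measurable
      moreover have "AE \<omega> in M. mix t Z Zt \<omega> = mix t Z Z' \<omega>" using Z' by (auto simp: mix_def)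
      ultimately have "mix t Z Z' \<in> Q" using Qsat m unfolding ae_saturated_def by blast
      then show "\<exists>t\<in>{0<..<1}. mix t Z Z' \<in> Q" using t by blast
    qed
    then show "Z' \<in> Qt_max M Q" unfolding Qt_max_def using Z'Q Z'pos dE by blast
  qed
  show "cond_MIX Q (Qt_max M Q)"
    unfolding cond_MIX_def
  proof (intro ballI)
    fix Z Zt t assume ZQ: "Z \<in> Q" and Zt: "Zt \<in> Qt_max M Q" and t: "t \<in> {0<..<(1::real)}"
    from Zt obtain E where ZtQ: "Zt \<in> Q" and pos: "AE \<omega> in M. Zt \<omega> > 0" and dE: "Linf_dense_in_DLinf M E"
      and EQ: "\<forall>Z\<in>E. \<exists>t\<in>{0<..<1}. mix t Z Zt \<in> Q" unfolding Qt_max_def by blast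
    define W where "W = mix t Z Zt"
    have WQ: "W \<in> Q" unfolding W_def using Qmix[OF ZQ ZtQ] t by auto
    have Zpos: "AE \<omega> in M. Z \<omega> \<ge> 0" using QD ZQ by (auto simp: Dens_def)
    have Wpos: "AE \<omega> in M. W \<omega> > 0" using Zpos pos
      by eventually_elim (use t in \<open>auto simp: W_def mix_def intro!: add_nonneg_pos\<close>)
    have "\<forall>Z''\<in>E. \<exists>s'\<in>{0<..<1}. mix s' Z'' W \<in> Q"
    proof
      fix Z'' assume Z'': "Z'' \<in> E"
      then obtain s where s: "s \<in> {0<..<1}" and A: "mix s Z'' Zt \<in> Q" using EQ by blast
      define a where "a = (1 - t) / 2"
      define s' where "s' = a * s"
      define b where "b = (1 - s') * t"
      define u where "u = b / (1 - a)"
      have a: "0 < a" "a < 1" unfolding a_def using t by auto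
      have s': "0 < s'" "s' < 1" unfolding s'_def using a s mult_strict_mono[of a 1 s 1] by auto
      have b: "0 \<le> b" "b \<le> 1 - a"
      proof -
        show "0 \<le> b" unfolding b_def using s' t by auto
        have "b \<le> t" unfolding b_def using s' t by (auto simp: mult_le_cancel_right1)
        moreover have "t \<le> 1 - a" unfolding a_def using t by (simp add: field_simps)
        ultimately show "b \<le> 1 - a" by linarith
      qed
      have u: "u \<in> {0..1}" unfolding u_def using a b by auto
      have ua: "(1 - a) * u = b" unfolding u_def using a by simp
      have V: "mix u Z Zt \<in> Q" by (rule Qmix[OF ZQ ZtQ u])
      have mQ: "mix a (mix s Z'' Zt) (mix u Z Zt) \<in> Q" by (rule Qmix[OF A V]) (use a in auto)
      have "mix s' Z'' W = mix a (mix s Z'' Zt) (mix u Z Zt)"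
      proof
        fix \<omega>
        have "mix a (mix s Z'' Zt) (mix u Z Zt) \<omega>
            = a * s * Z'' \<omega> + a * (1 - s) * Zt \<omega> + ((1 - a) * u) * Z \<omega> + ((1 - a) - (1 - a) * u) * Zt \<omega>"
          by (simp add: mix_def algebra_simps)
        also have "\<dots> = s' * Z'' \<omega> + a * (1 - s) * Zt \<omega> + b * Z \<omega> + ((1 - a) - b) * Zt \<omega>"
          unfolding ua s'_def by simp
        also have "\<dots> = mix s' Z'' W \<omega>"
          unfolding W_def mix_def b_def s'_def by (simp add: algebra_simps)
        finally show "mix s' Z'' W \<omega> = mix a (mix s Z'' Zt) (mix u Z Zt) \<omega>" by simp
      qed
      then have "mix s' Z'' W \<in> Q" using mQ by simp
      moreover have "s' \<in> {0<..<1}" using s' by simp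
      ultimately show "\<exists>s'\<in>{0<..<1}. mix s' Z'' W \<in> Q" by blast
    qed
    then show "mix t Z Zt \<in> Qt_max M Q" unfolding Qt_max_def using WQ Wpos dE W_def by blast
  qed
qed

theorem theorem4p20:
  fixes M :: "'a measure" and r :: real
    and S0 :: "'n::finite \<Rightarrow> real" and S1 :: "'n \<Rightarrow> 'a \<Rightarrow> real"
    and Q :: "('a \<Rightarrow> real) set"
  assumes mkt: "market M r S0 S1"
    and dual: "dual_set M Q"
    and condI: "\<forall>i. \<forall>Z\<in>Q. integrable M (\<lambda>\<omega>. Z \<omega> * ret S0 S1 i \<omega>)"
    and Pi0rho: "Pi0_rho M Q r S0 S1 = {(\<lambda>_. 0)}"
    and Qmax: "Qt_max M Q \<noteq> {}"
  shows "(\<not> rho_arbitrage M Q r S0 S1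
           \<longleftrightarrow> (\<exists>Qt. Qt \<noteq> {} \<and> Qt \<subseteq> Q \<and> ae_saturated M Qt \<and> cond_POS M Qt \<and>
                    cond_MIX Q Qt \<and> cond_INT M Q Qt \<and> Qt \<inter> Pset M r S0 S1 \<noteq> {}))
       \<and> (\<not> rho_arbitrage M Q r S0 S1
           \<longleftrightarrow> (\<forall>Qt. Qt \<noteq> {} \<and> Qt \<subseteq> Q \<and> ae_saturated M Qt \<and> cond_POS M Qt \<and>
                    cond_MIX Q Qt \<and> cond_INT M Q Qt \<longrightarrow> Qt \<inter> Pset M r S0 S1 \<noteq> {}))"
proof -
  let ?G = "\<lambda>Qt. Qt \<noteq> {} \<and> Qt \<subseteq> Q \<and> ae_saturated M Qt \<and> cond_POS M Qt \<and>
                    cond_MIX Q Qt \<and> cond_INT M Q Qt"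
  have QtOK: "?G (Qt_max M Q)" using Qmax Qtmax_props[OF dual] by blast
  have AC: "Qt \<inter> Pset M r S0 S1 \<noteq> {}" if noarb: "\<not> rho_arbitrage M Q r S0 S1" and G: "?G Qt" for Qt
  proof -
    from G obtain Zt where Zt: "Zt \<in> Qt" by blast
    show ?thesis
      by (rule B[OF mkt dual condI _ _ Zt]) (use B1[OF mkt dual condI Pi0rho noarb] G in blast)+
  qed
  have BA: "\<not> rho_arbitrage M Q r S0 S1" if G: "?G Qt" and P: "Qt \<inter> Pset M r S0 S1 \<noteq> {}" for Qt
  proof -
    from P obtain Zt where Zt: "Zt \<in> Qt" "Zt \<in> Pset M r S0 S1" by blast
    then obtain E where dE: "Linf_dense_in_DLinf M E" and EQ: "\<forall>Z\<in>E. \<exists>t\<in>{0<..<1}. mix t Z Zt \<in> Q"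
      using G unfolding cond_INT_def by blast
    have "Zt \<in> Q" using G Zt by blast
    then show ?thesis by (rule A[OF mkt dual condI _ Zt(2) dE EQ])
  qed
  have e1: "\<not> rho_arbitrage M Q r S0 S1 \<longleftrightarrow> (\<exists>Qt. ?G Qt \<and> Qt \<inter> Pset M r S0 S1 \<noteq> {})"
  proof
    assume na: "\<not> rho_arbitrage M Q r S0 S1"
    show "\<exists>Qt. ?G Qt \<and> Qt \<inter> Pset M r S0 S1 \<noteq> {}"
      by (rule exI[of _ "Qt_max M Q"]) (use QtOK AC[OF na QtOK] in simp)
  next
    assume "\<exists>Qt. ?G Qt \<and> Qt \<inter> Pset M r S0 S1 \<noteq> {}"
    then obtain Qt where "?G Qt" "Qt \<inter> Pset M r S0 S1 \<noteq> {}" by blast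
    then show "\<not> rho_arbitrage M Q r S0 S1" by (rule BA)
  qed
  have e2: "\<not> rho_arbitrage M Q r S0 S1 \<longleftrightarrow> (\<forall>Qt. ?G Qt \<longrightarrow> Qt \<inter> Pset M r S0 S1 \<noteq> {})"
  proof
    assume na: "\<not> rho_arbitrage M Q r S0 S1"
    show "\<forall>Qt. ?G Qt \<longrightarrow> Qt \<inter> Pset M r S0 S1 \<noteq> {}"
    proof (intro allI impI)
      fix Qt assume "?G Qt"
      then show "Qt \<inter> Pset M r S0 S1 \<noteq> {}" by (rule AC[OF na])
    qed
  next
    assume H: "\<forall>Qt. ?G Qt \<longrightarrow> Qt \<inter> Pset M r S0 S1 \<noteq> {}"
    then have "Qt_max M Q \<inter> Pset M r S0 S1 \<noteq> {}" using QtOK by blast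
    then show "\<not> rho_arbitrage M Q r S0 S1" by (rule BA[OF QtOK])
  qed
  show ?thesis using e1[unfolded conj_assoc] e2 by (rule conjI)
qed

end
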